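(* Let $G$ be a finite group and let $S$ be a partial rainbow on $G$. Then $S$ is a minimal generating set of the transfer system $\langle S\rangle$.
   Context: For a finite group $G$, an arrow is a pair $(K,H)$ of subgroups with $K\leqslant H$; it is an identity arrow if $K=H$. A $G$-transfer system is a set of arrows containing all identity arrows and closed under composition ($(A,B),(B,C)\Rightarrow(A,C)$), conjugation ($(A,B)\Rightarrow(gAg^{-1},gBg^{-1})$ for $g\in G$) and restriction ($(A,B)$ and $L\leqslant B\Rightarrow(A\cap L,L)$). For a set $S$ of non-identity arrows, $\langle S\rangle$ is the smallest transfer system containing $S$; $S$ is a minimal generating set of a transfer system $\mathsf{T}$ if $\langle S\rangle=\mathsf{T}$ and $\langle S\setminus\{s\}\rangle\neq\mathsf{T}$ for all $s\in S$. For a subgroup $K$, $P(K)$ denotes the sum of the exponents in the prime factorization of $|K|$. A rainbow on $\mathbb{N}$ is a finite set of pairs $\{(a_i,b_i)\}_{0\leqslant i\leqslant k}$ of natural numbers such that $i<j$ implies $a_i<a_j<b_j<b_i$. A partial rainbow on $G$ is a set $S$ of non-identity arrows such that (1) the set $\{(P(K),P(H)) : (K,H)\in S\}$ is a rainbow, and (2) for any $g\in G$ and $(K,H)\in S$, if $(gKg^{-1},gHg^{-1})\neq(K,H)$ then $(gKg^{-1},gHg^{-1})\notin S$. *)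

theory Defs
  imports "HOL-Algebra.Algebra" "HOL-Computational_Algebra.Primes"
begin

definition arrows :: "('a, 'b) monoid_scheme \<Rightarrow> ('a set \<times> 'a set) set" where
  "arrows G = {(K, H). subgroup K G \<and> subgroup H G \<and> K \<subseteq> H}"

definition conjg :: "('a, 'b) monoid_scheme \<Rightarrow> 'a \<Rightarrow> 'a set \<Rightarrow> 'a set" where
  "conjg G g A = (\<lambda>x. g \<otimes>\<^bsub>G\<^esub> x \<otimes>\<^bsub>G\<^esub> inv\<^bsub>G\<^esub> g) ` A"

definition transfer_system :: "('a, 'b) monoid_scheme \<Rightarrow> ('a set \<times> 'a set) set \<Rightarrow> bool" where
  "transfer_system G T \<longleftrightarrow>
     T \<subseteq> arrows G \<and>
     (\<forall>H. subgroup H G \<longrightarrow> (H, H) \<in> T) \<and>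
     (\<forall>A B C. (A, B) \<in> T \<and> (B, C) \<in> T \<longrightarrow> (A, C) \<in> T) \<and>
     (\<forall>A B g. (A, B) \<in> T \<and> g \<in> carrier G \<longrightarrow> (conjg G g A, conjg G g B) \<in> T) \<and>
     (\<forall>A B L. (A, B) \<in> T \<and> subgroup L G \<and> L \<subseteq> B \<longrightarrow> (A \<inter> L, L) \<in> T)"

definition gen_ts :: "('a, 'b) monoid_scheme \<Rightarrow> ('a set \<times> 'a set) set \<Rightarrow> ('a set \<times> 'a set) set" where
  "gen_ts G S = \<Inter> {T. transfer_system G T \<and> S \<subseteq> T}"

definition nonid_arrows :: "('a, 'b) monoid_scheme \<Rightarrow> ('a set \<times> 'a set) set \<Rightarrow> bool" where
  "nonid_arrows G S \<longleftrightarrow> S \<subseteq> arrows G \<and> (\<forall>(K, H) \<in> S. K \<noteq> H)"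

definition minimal_generating_set ::
  "('a, 'b) monoid_scheme \<Rightarrow> ('a set \<times> 'a set) set \<Rightarrow> ('a set \<times> 'a set) set \<Rightarrow> bool" where
  "minimal_generating_set G S T \<longleftrightarrow>
     nonid_arrows G S \<and> gen_ts G S = T \<and> (\<forall>s \<in> S. gen_ts G (S - {s}) \<noteq> T)"

definition Pexp :: "'a set \<Rightarrow> nat" where
  "Pexp K = (\<Sum>p \<in> prime_factors (card K). multiplicity p (card K))"

definition rainbow :: "(nat \<times> nat) set \<Rightarrow> bool" where
  "rainbow R \<longleftrightarrow> (\<exists>(a :: nat \<Rightarrow> nat) (b :: nat \<Rightarrow> nat) (k :: nat).
      R = {(a i, b i) | i. i \<le> k} \<and>
      (\<forall>i j. i < j \<and> j \<le> k \<longrightarrow> a i < a j \<and> a j < b j \<and> b j < b i))"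

definition partial_rainbow :: "('a, 'b) monoid_scheme \<Rightarrow> ('a set \<times> 'a set) set \<Rightarrow> bool" where
  "partial_rainbow G S \<longleftrightarrow>
     nonid_arrows G S \<and>
     rainbow ((\<lambda>(K, H). (Pexp K, Pexp H)) ` S) \<and>
     (\<forall>g \<in> carrier G. \<forall>(K, H) \<in> S.
        (conjg G g K, conjg G g H) \<noteq> (K, H) \<longrightarrow> (conjg G g K, conjg G g H) \<notin> S)"

end

theory Submission imports Defs begin

lemma (in group) conjg_conjg:
  assumes "g \<in> carrier G" "h \<in> carrier G" "A \<subseteq> carrier G"
  shows "conjg G g (conjg G h A) = conjg G (g \<otimes>\<^bsub>G\<^esub> h) A"
proof -
  show ?thesis unfolding conjg_def image_image
    apply (rule image_cong[OF refl])
    using assms subsetD[OF assms(3)] by (simp add: inv_mult_group m_assoc)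
qed

lemma (in group) conjg_one:
  assumes "A \<subseteq> carrier G"
  shows "conjg G \<one>\<^bsub>G\<^esub> A = A"
proof -
  have "\<And>x. x \<in> A \<Longrightarrow> \<one> \<otimes> x \<otimes> inv \<one> = x" using assms by auto
  then show ?thesis unfolding conjg_def by (simp cong: image_cong)
qed

lemma (in group) conjg_carrier:
  assumes "g \<in> carrier G" "A \<subseteq> carrier G"
  shows "conjg G g A \<subseteq> carrier G"
proof -
  show ?thesis unfolding conjg_def using assms by auto
qed

lemma (in group) conjg_subset_iff:
  assumes "g \<in> carrier G" "A1 \<subseteq> carrier G" "B1 \<subseteq> carrier G"
  shows "conjg G g A1 \<subseteq> conjg G g B1 \<longleftrightarrow> A1 \<subseteq> B1"
proof -
  show ?thesis
  proof
    assume "conjg G g A1 \<subseteq> conjg G g B1"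
    then have "conjg G (inv g) (conjg G g A1) \<subseteq> conjg G (inv g) (conjg G g B1)"
      unfolding conjg_def by (rule image_mono)
    then show "A1 \<subseteq> B1" using assms conjg_conjg[of "inv g" g] conjg_one
      by simp
  next
    assume "A1 \<subseteq> B1" then show "conjg G g A1 \<subseteq> conjg G g B1" unfolding conjg_def by blast
  qed
qed

lemma (in group) conjg_subgroup:
  assumes "g \<in> carrier G" "subgroup A G"
  shows "subgroup (conjg G g A) G"
proof -
  have AC: "A \<subseteq> carrier G" using assms(2) subgroup.subset by blast
  show ?thesis
  proof
    show "conjg G g A \<subseteq> carrier G" using conjg_carrier assms AC by blast
    show "\<one> \<in> conjg G g A" unfolding conjg_def
      using assms subgroup.one_closed[OF assms(2)]
      by (auto intro!: image_eqI[where x="\<one>"])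
  next
    fix x y assume "x \<in> conjg G g A" "y \<in> conjg G g A"
    then obtain a b where ab: "a \<in> A" "b \<in> A" "x = g \<otimes> a \<otimes> inv g" "y = g \<otimes> b \<otimes> inv g"
      unfolding conjg_def by auto
    have ac: "a \<in> carrier G" "b \<in> carrier G" using ab AC by auto
    have "x \<otimes> y = g \<otimes> (a \<otimes> b) \<otimes> inv g"
      using ab ac assms by (simp add: m_assoc flip: m_assoc[of "inv g" g])
    moreover have "a \<otimes> b \<in> A" using ab subgroup.m_closed[OF assms(2)] by blast
    ultimately show "x \<otimes> y \<in> conjg G g A" unfolding conjg_def by blast
  next
    fix x assume "x \<in> conjg G g A"
    then obtain a where ab: "a \<in> A" "x = g \<otimes> a \<otimes> inv g"
      unfolding conjg_def by auto
    have ac: "a \<in> carrier G" using ab AC by auto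
    have "inv x = g \<otimes> inv a \<otimes> inv g"
      using ab ac assms by (simp add: inv_mult_group m_assoc)
    moreover have "inv a \<in> A" using ab subgroup.m_inv_closed[OF assms(2)] by blast
    ultimately show "inv x \<in> conjg G g A" unfolding conjg_def by blast
  qed
qed

lemma (in group) conjg_card:
  assumes "g \<in> carrier G" "A \<subseteq> carrier G"
  shows "card (conjg G g A) = card A"
proof -
  have "inj_on (\<lambda>x. g \<otimes> x \<otimes> inv g) A"
  proof
    fix x y assume "x \<in> A" "y \<in> A" "g \<otimes> x \<otimes> inv g = g \<otimes> y \<otimes> inv g"
    then have "g \<otimes> x = g \<otimes> y" using assms subsetD[OF assms(2)] \<open>x \<in> A\<close> \<open>y \<in> A\<close>
      using r_cancel[of "inv g" "g \<otimes> x" "g \<otimes> y"] by simp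
    then show "x = y" using assms subsetD[OF assms(2)] \<open>x \<in> A\<close> \<open>y \<in> A\<close> by simp
  qed
  then show ?thesis unfolding conjg_def by (rule card_image)
qed

lemma Pexp_dvd:
  fixes a b :: nat
  assumes "a > 0" "b > 0" "a dvd b"
  shows "(\<Sum>p \<in> prime_factors a. multiplicity p a) \<le> (\<Sum>p \<in> prime_factors b. multiplicity p b)
     \<and> ((\<Sum>p \<in> prime_factors a. multiplicity p a) = (\<Sum>p \<in> prime_factors b. multiplicity p b) \<longrightarrow> a = b)"
proof -
  have sub: "prime_factors a \<subseteq> prime_factors b"
    using assms by (simp add: dvd_prime_factors)
  have le: "\<And>p. multiplicity p a \<le> multiplicity p b"
    using assms dvd_imp_multiplicity_le by blast
  have s1: "(\<Sum>p \<in> prime_factors a. multiplicity p a) \<le> (\<Sum>p \<in> prime_factors b. multiplicity p a)"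
    by (rule sum_mono2[OF _ sub]) auto
  have s2: "(\<Sum>p \<in> prime_factors b. multiplicity p a) \<le> (\<Sum>p \<in> prime_factors b. multiplicity p b)"
    by (rule sum_mono) (rule le)
  have eq: "a = b" if E: "(\<Sum>p \<in> prime_factors a. multiplicity p a) = (\<Sum>p \<in> prime_factors b. multiplicity p b)"
  proof (rule multiplicity_eq_nat[OF assms(1,2)])
    fix p :: nat assume pp: "Factorial_Ring.prime p"
    show "multiplicity p a = multiplicity p b"
    proof (cases "p \<in> prime_factors b")
      case True
      show ?thesis
      proof (rule ccontr)
        assume "multiplicity p a \<noteq> multiplicity p b"
        then have "multiplicity p a < multiplicity p b" using le[of p] by simp
        then have "(\<Sum>p \<in> prime_factors b. multiplicity p a) < (\<Sum>p \<in> prime_factors b. multiplicity p b)"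
          using True le by (intro sum_strict_mono_ex1) auto
        then show False using s1 E by simp
      qed
    next
      case False
      then have "\<not> p dvd b" using pp assms by (auto simp: in_prime_factors_iff)
      then have "\<not> p dvd a" using assms(3) dvd_trans by blast
      then show ?thesis using \<open>\<not> p dvd b\<close> by (simp add: not_dvd_imp_multiplicity_0)
    qed
  qed
  show ?thesis using s1 s2 eq by linarith
qed

lemma (in group) Pexp_subgroup:
  assumes "finite (carrier G)" "subgroup A G" "subgroup B G" "A \<subseteq> B"
  shows "Pexp A \<le> Pexp B \<and> (Pexp A = Pexp B \<longrightarrow> A = B)"
proof -
  have gB: "group (G\<lparr>carrier := B\<rparr>)" using assms(3) subgroup.subgroup_is_group is_group by blast
  have sA: "subgroup A (G\<lparr>carrier := B\<rparr>)" using subgroup_incl assms by blast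
  have fB: "finite B" using assms(1,3) subgroup.subset finite_subset by blast
  have fA: "finite A" using fB assms(4) finite_subset by blast
  have "card (rcosets\<^bsub>G\<lparr>carrier := B\<rparr>\<^esub> A) * card A = card B"
    using group.lagrange[OF gB sA] by (simp add: order_def)
  then have dv: "card A dvd card B" by (metis dvd_triv_right)
  have pA: "card A > 0" using fA subgroup.one_closed[OF assms(2)] card_gt_0_iff by blast
  have pB: "card B > 0" using fB subgroup.one_closed[OF assms(3)] card_gt_0_iff by blast
  show ?thesis using Pexp_dvd[OF pA pB dv] unfolding Pexp_def
    using card_subset_eq[OF fB assms(4)] by auto
qed


lemma rainbow_le_eq:
  assumes "rainbow R" "(x, y) \<in> R" "(x', y') \<in> R" "x \<le> x'" "y \<le> y'"
  shows "x = x' \<and> y = y'"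
proof -
  obtain a b :: "nat \<Rightarrow> nat" and k :: nat where R: "R = {(a i, b i) | i. i \<le> k}"
    and m: "\<forall>i j. i < j \<and> j \<le> k \<longrightarrow> a i < a j \<and> a j < b j \<and> b j < b i"
    using assms(1) unfolding rainbow_def by blast
  obtain i where i: "i \<le> k" "x = a i" "y = b i" using assms(2) unfolding R by auto
  obtain j where j: "j \<le> k" "x' = a j" "y' = b j" using assms(3) unfolding R by auto
  have "i = j"
  proof (rule ccontr)
    assume "i \<noteq> j"
    then have "i < j \<or> j < i" by arith
    then show False
    proof
      assume ij: "i < j" then have "b j < b i" using m[rule_format, of i j] j(1) by simp
      then show False using i j assms(5) by simp
    next
      assume ji: "j < i" then have "a j < a i" using m[rule_format, of j i] i(1) by simp
      then show False using i j assms(4) by simp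
    qed
  qed
  then show ?thesis using i j by simp
qed

theorem proposition3p3:
  fixes G :: "('a, 'b) monoid_scheme" and S :: "('a set \<times> 'a set) set"
  assumes "group G" and "finite (carrier G)" and "partial_rainbow G S"
  shows "minimal_generating_set G S (gen_ts G S)"
proof -
  interpret group G by fact
  have nonid: "nonid_arrows G S"
    and rb: "rainbow ((\<lambda>(K, H). (Pexp K, Pexp H)) ` S)"
    and cj: "\<forall>g \<in> carrier G. \<forall>(K, H) \<in> S.
        (conjg G g K, conjg G g H) \<noteq> (K, H) \<longrightarrow> (conjg G g K, conjg G g H) \<notin> S"
    using assms(3) unfolding partial_rainbow_def by auto
  have Sarr: "S \<subseteq> arrows G" and Sne: "\<And>K H. (K, H) \<in> S \<Longrightarrow> K \<noteq> H"
    using nonid unfolding nonid_arrows_def by auto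
  have subc: "\<And>Q. subgroup Q G \<Longrightarrow> Q \<subseteq> carrier G" using subgroup.subset by blast
  have "\<forall>s\<in>S. gen_ts G (S - {s}) \<noteq> gen_ts G S"
  proof
    fix s assume sS: "s \<in> S"
    obtain K H where s: "s = (K, H)" by (cases s)
    have KH: "subgroup K G" "subgroup H G" "K \<subseteq> H" "K \<noteq> H"
      using Sarr sS Sne[of K H] s unfolding arrows_def by auto
    define T where "T = {(A, B). (A, B) \<in> arrows G \<and> \<not> (\<exists>g\<in>carrier G.
        conjg G g K \<subseteq> A \<and> conjg G g H \<subseteq> B \<and> \<not> conjg G g H \<subseteq> A)}"
    have ts: "transfer_system G T"
      unfolding transfer_system_def
    proof (intro conjI allI impI)
      show "T \<subseteq> arrows G" unfolding T_def by auto
    next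
      fix Q assume "subgroup Q G"
      then have "(Q, Q) \<in> arrows G" unfolding arrows_def by simp
      then show "(Q, Q) \<in> T" unfolding T_def by simp
    next
      fix A B C assume asm: "(A, B) \<in> T \<and> (B, C) \<in> T"
      then have a1: "(A, B) \<in> arrows G" "(B, C) \<in> arrows G" unfolding T_def by auto
      then have a2: "(A, C) \<in> arrows G" unfolding arrows_def by auto
      have n1: "\<not> (\<exists>g\<in>carrier G.
        conjg G g K \<subseteq> A \<and> conjg G g H \<subseteq> B \<and> \<not> conjg G g H \<subseteq> A)"
        using asm unfolding T_def by simp
      have n2: "\<not> (\<exists>g\<in>carrier G.
        conjg G g K \<subseteq> B \<and> conjg G g H \<subseteq> C \<and> \<not> conjg G g H \<subseteq> B)"
        using asm unfolding T_def by simp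
      have AB: "A \<subseteq> B" using a1 unfolding arrows_def by simp
      have "\<not> (conjg G g K \<subseteq> A \<and> conjg G g H \<subseteq> C \<and> \<not> conjg G g H \<subseteq> A)"
        if g: "g \<in> carrier G" for g
        using n1 n2 g AB by (meson order_trans)
      then show "(A, C) \<in> T" unfolding T_def using a2 by simp
    next
      fix A B c assume asm: "(A, B) \<in> T \<and> c \<in> carrier G"
      then have AB: "subgroup A G" "subgroup B G" "A \<subseteq> B" and c: "c \<in> carrier G"
        unfolding T_def arrows_def by auto
      have nb: "\<not> (\<exists>g\<in>carrier G.
        conjg G g K \<subseteq> A \<and> conjg G g H \<subseteq> B \<and> \<not> conjg G g H \<subseteq> A)"
        using asm unfolding T_def by auto
      have arr: "(conjg G c A, conjg G c B) \<in> arrows G"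
        unfolding arrows_def using AB c conjg_subgroup conjg_subset_iff subc by auto
      have "\<not> (conjg G g K \<subseteq> conjg G c A \<and> conjg G g H \<subseteq> conjg G c B
               \<and> \<not> conjg G g H \<subseteq> conjg G c A)" if g: "g \<in> carrier G" for g
      proof
        assume bad: "conjg G g K \<subseteq> conjg G c A \<and> conjg G g H \<subseteq> conjg G c B
               \<and> \<not> conjg G g H \<subseteq> conjg G c A"
        define g' where "g' = inv\<^bsub>G\<^esub> c \<otimes>\<^bsub>G\<^esub> g"
        have g': "g' \<in> carrier G" using g c g'_def by simp
        have e: "c \<otimes>\<^bsub>G\<^esub> g' = g" using g c g'_def by (simp flip: m_assoc)
        have eK: "conjg G g K = conjg G c (conjg G g' K)"
          using conjg_conjg[OF c g' subc[OF KH(1)]] e by simp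
        have eH: "conjg G g H = conjg G c (conjg G g' H)"
          using conjg_conjg[OF c g' subc[OF KH(2)]] e by simp
        have cK: "conjg G g' K \<subseteq> carrier G" using conjg_carrier g' subc KH by blast
        have cH: "conjg G g' H \<subseteq> carrier G" using conjg_carrier g' subc KH by blast
        have "conjg G g' K \<subseteq> A \<and> conjg G g' H \<subseteq> B \<and> \<not> conjg G g' H \<subseteq> A"
          using bad unfolding eK eH
          using conjg_subset_iff[OF c cK subc[OF AB(1)]] conjg_subset_iff[OF c cH subc[OF AB(2)]]
            conjg_subset_iff[OF c cH subc[OF AB(1)]] by simp
        then show False using nb g' by blast
      qed
      then show "(conjg G c A, conjg G c B) \<in> T" using arr unfolding T_def by blast
    next
      fix A B L assume asm: "(A, B) \<in> T \<and> subgroup L G \<and> L \<subseteq> B"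
      then have "(A \<inter> L, L) \<in> arrows G" unfolding T_def arrows_def
        using subgroups_Inter_pair by auto
      then show "(A \<inter> L, L) \<in> T" using asm unfolding T_def by blast
    qed
    have sub: "S - {s} \<subseteq> T"
    proof
      fix t assume tS: "t \<in> S - {s}"
      obtain K' H' where t: "t = (K', H')" by (cases t)
      have KH': "subgroup K' G" "subgroup H' G" "K' \<subseteq> H'"
        using Sarr tS t unfolding arrows_def by auto
      have "\<not> (conjg G g K \<subseteq> K' \<and> conjg G g H \<subseteq> H')" if g: "g \<in> carrier G" for g
      proof
        assume bad: "conjg G g K \<subseteq> K' \<and> conjg G g H \<subseteq> H'"
        have sgK: "subgroup (conjg G g K) G" using conjg_subgroup g KH by blast
        have sgH: "subgroup (conjg G g H) G" using conjg_subgroup g KH by blast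
        have pK: "Pexp (conjg G g K) = Pexp K" unfolding Pexp_def
          using conjg_card g subc KH by simp
        have pH: "Pexp (conjg G g H) = Pexp H" unfolding Pexp_def
          using conjg_card g subc KH by simp
        have le1: "Pexp K \<le> Pexp K'" and q1: "Pexp K = Pexp K' \<longrightarrow> conjg G g K = K'"
          using Pexp_subgroup[OF assms(2) sgK KH'(1)] bad pK by auto
        have le2: "Pexp H \<le> Pexp H'" and q2: "Pexp H = Pexp H' \<longrightarrow> conjg G g H = H'"
          using Pexp_subgroup[OF assms(2) sgH KH'(2)] bad pH by auto
        have "(Pexp K, Pexp H) \<in> (\<lambda>(K, H). (Pexp K, Pexp H)) ` S" using sS s by force
        moreover have "(Pexp K', Pexp H') \<in> (\<lambda>(K, H). (Pexp K, Pexp H)) ` S" using tS t by force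
        ultimately have "Pexp K = Pexp K' \<and> Pexp H = Pexp H'"
          using rainbow_le_eq[OF rb] le1 le2 by blast
        then have eq: "conjg G g K = K'" "conjg G g H = H'" using q1 q2 by auto
        have "(conjg G g K, conjg G g H) \<noteq> (K, H) \<longrightarrow> (conjg G g K, conjg G g H) \<notin> S"
          using cj g sS s by blast
        then show False using eq tS t s by auto
      qed
      then show "t \<in> T" unfolding T_def using t Sarr tS by blast
    qed
    have nT: "s \<notin> T"
    proof
      assume "s \<in> T"
      moreover have "conjg G \<one>\<^bsub>G\<^esub> K \<subseteq> K \<and> conjg G \<one>\<^bsub>G\<^esub> H \<subseteq> H \<and> \<not> conjg G \<one>\<^bsub>G\<^esub> H \<subseteq> K"
        using conjg_one subc KH by auto
      ultimately show False unfolding T_def s by blast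
    qed
    have "gen_ts G (S - {s}) \<subseteq> T" unfolding gen_ts_def using ts sub by blast
    moreover have "s \<in> gen_ts G S" unfolding gen_ts_def using sS by blast
    ultimately show "gen_ts G (S - {s}) \<noteq> gen_ts G S" using nT by blast
  qed
  then show ?thesis unfolding minimal_generating_set_def using nonid by blast
qed

end
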